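(* For any graph $G$ and any bipartite graph $H$ in which all vertex degrees are odd, $\alpha_{\mathrm{od}}(\mu[G,H])\ge \frac12|H|\cdot\alpha_{\mathrm{od}}(G\,\Box\,K_2)$.
   Context: For graphs $G$ and $H$, $\mu[G,H]$ is the graph obtained by replacing each vertex $w\in V(H)$ with a copy $G_w$ of $G$ and, for every edge $w_1w_2\in E(H)$, adding the perfect matching between $G_{w_1}$ and $G_{w_2}$ joining the two copies of each vertex of $G$. $G\,\Box\,K_2$ is the Cartesian product of $G$ with an edge (two copies of $G$ with a perfect matching between corresponding vertices). An odd independent set in a graph $F=(V,E)$ is an independent set $S$ such that every $v\in V\setminus S$ has either no neighbor or an odd number of neighbors in $S$; $\alpha_{\mathrm{od}}(F)$ is the maximum size of such a set. $|H|$ is the number of vertices. *)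

theory Defs
  imports Complex_Main
begin

definition graph :: "'a set \<Rightarrow> ('a \<Rightarrow> 'a \<Rightarrow> bool) \<Rightarrow> bool" where
  "graph V E \<longleftrightarrow> finite V \<and> (\<forall>x y. E x y \<longrightarrow> x \<in> V \<and> y \<in> V)
     \<and> (\<forall>x y. E x y \<longrightarrow> E y x) \<and> (\<forall>x. \<not> E x x)"

definition neighbors :: "'a set \<Rightarrow> ('a \<Rightarrow> 'a \<Rightarrow> bool) \<Rightarrow> 'a \<Rightarrow> 'a set" where
  "neighbors V E v = {u \<in> V. E v u}"

definition degree :: "'a set \<Rightarrow> ('a \<Rightarrow> 'a \<Rightarrow> bool) \<Rightarrow> 'a \<Rightarrow> nat" where
  "degree V E v = card (neighbors V E v)"

definition bipartite :: "'a set \<Rightarrow> ('a \<Rightarrow> 'a \<Rightarrow> bool) \<Rightarrow> bool" where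
  "bipartite V E \<longleftrightarrow> (\<exists>A B. A \<union> B = V \<and> A \<inter> B = {} \<and>
     (\<forall>x y. E x y \<longrightarrow> (x \<in> A \<and> y \<in> B) \<or> (x \<in> B \<and> y \<in> A)))"

definition independent :: "'a set \<Rightarrow> ('a \<Rightarrow> 'a \<Rightarrow> bool) \<Rightarrow> 'a set \<Rightarrow> bool" where
  "independent V E S \<longleftrightarrow> S \<subseteq> V \<and> (\<forall>x\<in>S. \<forall>y\<in>S. \<not> E x y)"

definition odd_independent :: "'a set \<Rightarrow> ('a \<Rightarrow> 'a \<Rightarrow> bool) \<Rightarrow> 'a set \<Rightarrow> bool" where
  "odd_independent V E S \<longleftrightarrow> independent V E S \<and>
     (\<forall>v \<in> V - S. card (neighbors V E v \<inter> S) = 0 \<or> odd (card (neighbors V E v \<inter> S)))"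

definition alpha_od :: "'a set \<Rightarrow> ('a \<Rightarrow> 'a \<Rightarrow> bool) \<Rightarrow> nat" where
  "alpha_od V E = Max (card ` {S. odd_independent V E S})"

text \<open>mu[G,H]: vertex (v,w) is the copy of v in G_w.\<close>
definition mu_V :: "'a set \<Rightarrow> 'b set \<Rightarrow> ('a \<times> 'b) set" where
  "mu_V VG VH = VG \<times> VH"

definition mu_E :: "('a \<Rightarrow> 'a \<Rightarrow> bool) \<Rightarrow> ('b \<Rightarrow> 'b \<Rightarrow> bool) \<Rightarrow> ('a \<times> 'b) \<Rightarrow> ('a \<times> 'b) \<Rightarrow> bool" where
  "mu_E EG EH p q \<longleftrightarrow> (snd p = snd q \<and> EG (fst p) (fst q)) \<or> (fst p = fst q \<and> EH (snd p) (snd q))"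

text \<open>G \<box> K_2: two copies (indexed by bool) with the matching between them.\<close>
definition boxK2_V :: "'a set \<Rightarrow> ('a \<times> bool) set" where
  "boxK2_V VG = VG \<times> (UNIV :: bool set)"

definition boxK2_E :: "('a \<Rightarrow> 'a \<Rightarrow> bool) \<Rightarrow> ('a \<times> bool) \<Rightarrow> ('a \<times> bool) \<Rightarrow> bool" where
  "boxK2_E EG p q \<longleftrightarrow> (snd p = snd q \<and> EG (fst p) (fst q)) \<or> (fst p = fst q \<and> snd p \<noteq> snd q)"

end

theory Submission
  imports Defs
begin

lemma alpha_od_ge:
  assumes "finite V" "odd_independent V E S"
  shows "card S \<le> alpha_od V E"
proof -
  have "{S. odd_independent V E S} \<subseteq> Pow V"
    by (auto simp: odd_independent_def independent_def)
  hence "finite {S. odd_independent V E S}" using assms(1) finite_subset by blast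
  thus ?thesis unfolding alpha_od_def using assms(2) by (intro Max_ge) auto
qed

lemma alpha_od_ex:
  assumes "finite V"
  shows "\<exists>S. odd_independent V E S \<and> card S = alpha_od V E"
proof -
  have "{S. odd_independent V E S} \<subseteq> Pow V"
    by (auto simp: odd_independent_def independent_def)
  hence "finite {S. odd_independent V E S}" using assms(1) finite_subset by blast
  moreover have "odd_independent V E {}"
    by (auto simp: odd_independent_def independent_def)
  ultimately have "alpha_od V E \<in> card ` {S. odd_independent V E S}"
    unfolding alpha_od_def by (intro Max_in) auto
  thus ?thesis by auto
qed

lemma key:
  assumes gG: "graph VG EG" and gH: "graph VH EH"
    and gsep: "\<And>w w'. EH w w' \<Longrightarrow> g w \<noteq> (g w' :: bool)"
    and oddH: "\<forall>w \<in> VH. odd (degree VH EH w)"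
    and S: "odd_independent (boxK2_V VG) (boxK2_E EG) S"
  shows "odd_independent (mu_V VG VH) (mu_E EG EH) {(v,w). v \<in> VG \<and> w \<in> VH \<and> (v, g w) \<in> S}"
    (is "odd_independent _ _ ?T")
proof -
  have Sind: "\<And>p q. p \<in> S \<Longrightarrow> q \<in> S \<Longrightarrow> \<not> boxK2_E EG p q"
    and Ssub: "S \<subseteq> VG \<times> UNIV"
    using S by (auto simp: odd_independent_def independent_def boxK2_V_def)
  have Sodd: "\<And>p. p \<in> boxK2_V VG - S \<Longrightarrow>
      card (neighbors (boxK2_V VG) (boxK2_E EG) p \<inter> S) = 0 \<or>
      odd (card (neighbors (boxK2_V VG) (boxK2_E EG) p \<inter> S))"
    using S by (auto simp: odd_independent_def)
  have fG: "finite VG" and fH: "finite VH" using gG gH by (auto simp: graph_def)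
  have EGV: "\<And>x y. EG x y \<Longrightarrow> x \<in> VG \<and> y \<in> VG" using gG by (auto simp: graph_def)
  have EHV: "\<And>x y. EH x y \<Longrightarrow> x \<in> VH \<and> y \<in> VH" using gH by (auto simp: graph_def)
  have EHirr: "\<And>x. \<not> EH x x" using gH by (auto simp: graph_def)
  have indep: "independent (mu_V VG VH) (mu_E EG EH) ?T"
    unfolding independent_def
  proof (intro conjI ballI)
    show "?T \<subseteq> mu_V VG VH" by (auto simp: mu_V_def)
  next
    fix p q assume p: "p \<in> ?T" and q: "q \<in> ?T"
    obtain v w where pv: "p = (v,w)" by (cases p)
    obtain v' w' where qv: "q = (v',w')" by (cases q)
    show "\<not> mu_E EG EH p q"
    proof
      assume "mu_E EG EH p q"
      hence "(w = w' \<and> EG v v') \<or> (v = v' \<and> EH w w')" by (simp add: mu_E_def pv qv)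
      thus False
      proof
        assume h: "w = w' \<and> EG v v'"
        have "boxK2_E EG (v, g w) (v', g w)" using h by (simp add: boxK2_E_def)
        thus False using Sind[of "(v, g w)" "(v', g w)"] p q h pv qv by auto
      next
        assume h: "v = v' \<and> EH w w'"
        have "boxK2_E EG (v, g w) (v, g w')" using h gsep[of w w'] by (simp add: boxK2_E_def)
        thus False using Sind[of "(v, g w)" "(v, g w')"] p q h pv qv by auto
      qed
    qed
  qed
  have oddp: "card (neighbors (mu_V VG VH) (mu_E EG EH) p \<inter> ?T) = 0 \<or>
      odd (card (neighbors (mu_V VG VH) (mu_E EG EH) p \<inter> ?T))"
    if pin: "p \<in> mu_V VG VH - ?T" for p
  proof -
    obtain v w where pv: "p = (v,w)" by (cases p)
    have v: "v \<in> VG" and w: "w \<in> VH" and nS: "(v, g w) \<notin> S"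
      using pin pv by (auto simp: mu_V_def)
    define C where "C = neighbors VG EG v \<inter> {u. (u, g w) \<in> S}"
    define b where "b = ((v, \<not> g w) \<in> S)"
    have fC: "finite C" using fG by (auto simp: C_def neighbors_def)
    have NH: "finite (neighbors VH EH w)" using fH by (auto simp: neighbors_def)
    have eq1: "neighbors (mu_V VG VH) (mu_E EG EH) p \<inter> ?T =
        (\<lambda>u. (u, w)) ` C \<union> (if b then (\<lambda>w'. (v, w')) ` neighbors VH EH w else {})"
    proof -
      have gn: "g w' = (\<not> g w)" if "EH w w'" for w' using gsep[OF that] by auto
      show ?thesis
        unfolding pv C_def b_def neighbors_def mu_V_def mu_E_def
        using v w EGV EHV gn by (auto simp: split: if_splits)
    qed
    have c1: "card (neighbors (mu_V VG VH) (mu_E EG EH) p \<inter> ?T) =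
        card C + (if b then degree VH EH w else 0)"
    proof -
      have disj: "(\<lambda>u. (u, w)) ` C \<inter> (if b then (\<lambda>w'. (v, w')) ` neighbors VH EH w else {}) = {}"
        using EHirr by (auto simp: neighbors_def)
      have "card ((\<lambda>u. (u, w)) ` C) = card C" by (rule card_image) (auto simp: inj_on_def)
      moreover have "card ((\<lambda>w'. (v, w')) ` neighbors VH EH w) = degree VH EH w"
        unfolding degree_def by (rule card_image) (auto simp: inj_on_def)
      ultimately show ?thesis unfolding eq1
        using card_Un_disjoint[OF finite_imageI[OF fC] _ disj] NH by auto
    qed
    have q: "(v, g w) \<in> boxK2_V VG - S" using v nS by (simp add: boxK2_V_def)
    have eq2: "neighbors (boxK2_V VG) (boxK2_E EG) (v, g w) \<inter> S =
        (\<lambda>u. (u, g w)) ` C \<union> (if b then {(v, \<not> g w)} else {})"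
      unfolding C_def b_def neighbors_def boxK2_V_def boxK2_E_def
      using v EGV Ssub by (auto split: if_splits)
    have c2: "card (neighbors (boxK2_V VG) (boxK2_E EG) (v, g w) \<inter> S) =
        card C + (if b then 1 else 0)"
    proof -
      have "card ((\<lambda>u. (u, g w)) ` C) = card C" by (rule card_image) (auto simp: inj_on_def)
      moreover have "(v, \<not> g w) \<notin> (\<lambda>u. (u, g w)) ` C" by auto
      moreover note ci = card_insert_disjoint[OF finite_imageI[OF fC], of "(v, \<not> g w)" "(\<lambda>u. (u, g w))"]
      ultimately show ?thesis unfolding eq2 by simp
    qed
    have od: "odd (degree VH EH w)" using oddH w by auto
    from Sodd[OF q] c2 have "(card C = 0 \<and> \<not> b) \<or> odd (card C + (if b then 1 else 0))"
      by (auto split: if_splits)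
    thus ?thesis unfolding c1 using od by (cases b) auto
  qed
  show ?thesis unfolding odd_independent_def
  proof (intro conjI ballI)
    show "independent (mu_V VG VH) (mu_E EG EH) ?T" by (rule indep)
  next
    fix p assume "p \<in> mu_V VG VH - ?T"
    thus "card (neighbors (mu_V VG VH) (mu_E EG EH) p \<inter> ?T) = 0 \<or>
      odd (card (neighbors (mu_V VG VH) (mu_E EG EH) p \<inter> ?T))" by (rule oddp)
  qed
qed

lemma card_T:
  assumes fH: "finite VH" and fG: "finite VG"
  shows "card {(v,w). v \<in> VG \<and> w \<in> VH \<and> (v, g w) \<in> S} =
    (\<Sum>w\<in>VH. card {v \<in> VG. (v, g w) \<in> S})"
proof -
  have "{(v,w). v \<in> VG \<and> w \<in> VH \<and> (v, g w) \<in> S} =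
     (\<lambda>(w,v). (v,w)) ` (SIGMA w:VH. {v \<in> VG. (v, g w) \<in> S})" by auto
  moreover have "inj_on (\<lambda>(w,v). (v,w)) (SIGMA w:VH. {v \<in> VG. (v, g w) \<in> S})"
    by (auto simp: inj_on_def)
  ultimately show ?thesis using card_SigmaI fH fG by (simp add: card_image)
qed

theorem theorem4:
  fixes VG :: "'a set" and EG :: "'a \<Rightarrow> 'a \<Rightarrow> bool"
    and VH :: "'b set" and EH :: "'b \<Rightarrow> 'b \<Rightarrow> bool"
  assumes "graph VG EG" and "graph VH EH"
    and "bipartite VH EH"
    and "\<forall>w \<in> VH. odd (degree VH EH w)"
  shows "real (alpha_od (mu_V VG VH) (mu_E EG EH))
           \<ge> 1/2 * real (card VH) * real (alpha_od (boxK2_V VG) (boxK2_E EG))"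
proof -
  have fG: "finite VG" and fH: "finite VH" using assms(1,2) by (auto simp: graph_def)
  have fB: "finite (boxK2_V VG)" using fG by (simp add: boxK2_V_def)
  have fM: "finite (mu_V VG VH)" using fG fH by (simp add: mu_V_def)
  obtain S where S: "odd_independent (boxK2_V VG) (boxK2_E EG) S"
    and cS: "card S = alpha_od (boxK2_V VG) (boxK2_E EG)"
    using alpha_od_ex[OF fB] by blast
  have Ssub: "S \<subseteq> VG \<times> UNIV"
    using S by (auto simp: odd_independent_def independent_def boxK2_V_def)
  obtain A B where AB: "A \<union> B = VH" "A \<inter> B = {}"
    "\<forall>x y. EH x y \<longrightarrow> (x \<in> A \<and> y \<in> B) \<or> (x \<in> B \<and> y \<in> A)"
    using assms(3) unfolding bipartite_def by blast
  define g1 where "g1 = (\<lambda>w. w \<in> B)"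
  define g2 where "g2 = (\<lambda>w. w \<notin> B)"
  have s1: "\<And>w w'. EH w w' \<Longrightarrow> g1 w \<noteq> g1 w'" using AB unfolding g1_def by blast
  have s2: "\<And>w w'. EH w w' \<Longrightarrow> g2 w \<noteq> g2 w'" using AB unfolding g2_def by blast
  define c where "c = (\<lambda>b. card {v \<in> VG. (v, b) \<in> S})"
  have cS2: "card S = c True + c False"
  proof -
    have "S = {v \<in> VG. (v, True) \<in> S} \<times> {True} \<union> {v \<in> VG. (v, False) \<in> S} \<times> {False}"
      using Ssub by (auto; case_tac b; auto)
    hence "card S = card ({v \<in> VG. (v, True) \<in> S} \<times> {True}) + card ({v \<in> VG. (v, False) \<in> S} \<times> {False})"
    proof -
      have d: "({v \<in> VG. (v, True) \<in> S} \<times> {True}) \<inter> ({v \<in> VG. (v, False) \<in> S} \<times> {False}) = {}" by auto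
      have "finite ({v \<in> VG. (v, True) \<in> S} \<times> {True})" "finite ({v \<in> VG. (v, False) \<in> S} \<times> {False})" using fG by auto
      from card_Un_disjoint[OF this d] show ?thesis by (subst \<open>S = _\<close>) simp
    qed
    moreover have "card (X \<times> {y}) = card X" for X :: "'a set" and y :: bool
      by (simp add: card_cartesian_product)
    ultimately show ?thesis unfolding c_def by simp
  qed
    note t1 = alpha_od_ge[OF fM key[where g=g1, OF assms(1,2) s1 assms(4) S]]
  note t2 = alpha_od_ge[OF fM key[where g=g2, OF assms(1,2) s2 assms(4) S]]
  have sum: "(\<Sum>w\<in>VH. c (g1 w)) + (\<Sum>w\<in>VH. c (g2 w)) = card VH * card S"
  proof -
    have "(\<Sum>w\<in>VH. c (g1 w)) + (\<Sum>w\<in>VH. c (g2 w)) = (\<Sum>w\<in>VH. c (g1 w) + c (g2 w))"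
      by (simp add: sum.distrib)
    also have "\<dots> = (\<Sum>w\<in>VH. card S)"
    proof (rule sum.cong)
      fix w show "c (g1 w) + c (g2 w) = card S"
        by (cases "w \<in> B") (simp_all add: g1_def g2_def cS2)
    qed simp
    finally show ?thesis by simp
  qed
  let ?M = "alpha_od (mu_V VG VH) (mu_E EG EH)"
  have "card VH * card S \<le> 2 * ?M"
    using t1 t2 sum card_T[OF fH fG, of g1 S] card_T[OF fH fG, of g2 S]
    unfolding c_def by linarith
  hence "real (card VH) * real (card S) \<le> 2 * real ?M"
    proof -
    have "real (card VH * card S) \<le> real (2 * ?M)" using \<open>card VH * card S \<le> 2 * ?M\<close> by (rule of_nat_mono)
    thus ?thesis by simp
  qed
  thus ?thesis using cS by simp
qed

end
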